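(* Let $p=3$. Let $\tau_1=(\tau_1(i))_{1\le i\le 4}$ be an assigned family of four abelian type invariants (types of finite abelian $3$-groups). Then the set $\mathrm{Cnt}_3^2((1^2),\tau_1)$ of isomorphism classes of finite metabelian $3$-groups $\mathfrak{M}$ such that $\mathfrak{M}/\mathfrak{M}'$ is of type $(1^2)$, i.e. $\mathfrak{M}/\mathfrak{M}'\simeq C_3\times C_3$, and $\tau_1\mathfrak{M}=(H/H')_{H\in\mathrm{Lyr}_1\mathfrak{M}}\simeq\tau_1$ (as families of abelian type invariants, up to reordering) is finite.
   Context: For a finite $p$-group (or pro-$p$ group) $G$ with $G/G'$ finite and $n\ge 0$, $\mathrm{Lyr}_n G$ denotes the set of subgroups $H$ with $G'\le H\le G$ and $(G:H)=p^n$. For $G/G'$ of type $(p,p)$, $\mathrm{Lyr}_1 G$ consists of the $p+1$ maximal subgroups of $G$. Abelian type invariants are written in logarithmic notation: a type $(a_1,a_2,\dots)$ with $a_1\ge a_2\ge\dots$ stands for $C_{p^{a_1}}\times C_{p^{a_2}}\times\cdots$, e.g. $21$ means $C_9\times C_3$, $1^2$ means $C_3\times C_3$, $1^3$ means $C_3^3$; an exponent on a parenthesized type such as $(21)^3$ denotes that many repeated components. *)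

theory Defs
  imports "HOL-Algebra.Algebra" "HOL-Library.Multiset"
begin

text \<open>Abelian type invariants are multisets of positive exponents (logarithmic notation).\<close>

definition cyc_prod :: "nat \<Rightarrow> nat multiset \<Rightarrow> (nat \<Rightarrow> int) monoid" where
  "cyc_prod p t = product_group {..<size t}
      (\<lambda>i. integer_mod_group (p ^ (sorted_list_of_multiset t ! i)))"

definition has_abelian_type :: "nat \<Rightarrow> ('a, 'b) monoid_scheme \<Rightarrow> nat multiset \<Rightarrow> bool" where
  "has_abelian_type p A t \<longleftrightarrow> (\<forall>a \<in># t. a \<ge> 1) \<and> A \<cong> cyc_prod p t"

definition abelianization :: "('a, 'b) monoid_scheme \<Rightarrow> 'a set \<Rightarrow> 'a set monoid" where
  "abelianization G H = (G\<lparr>carrier := H\<rparr>) Mod (derived G H)"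

definition metabelian :: "('a, 'b) monoid_scheme \<Rightarrow> bool" where
  "metabelian G \<longleftrightarrow> derived G (derived G (carrier G)) = {\<one>\<^bsub>G\<^esub>}"

definition Lyr :: "nat \<Rightarrow> nat \<Rightarrow> ('a, 'b) monoid_scheme \<Rightarrow> 'a set set" where
  "Lyr p n G = {H. subgroup H G \<and> derived G (carrier G) \<subseteq> H \<and> card (rcosets\<^bsub>G\<^esub> H) = p ^ n}"

definition Cnt_cond :: "nat \<Rightarrow> (nat \<Rightarrow> nat multiset) \<Rightarrow> ('a, 'b) monoid_scheme \<Rightarrow> bool" where
  "Cnt_cond p \<tau> G \<longleftrightarrow>
     group G \<and> finite (carrier G) \<and> (\<exists>n. card (carrier G) = p ^ n) \<and> metabelian G \<and>
     has_abelian_type p (abelianization G (carrier G)) {#1, 1#} \<and>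
     (\<exists>\<sigma>. bij_betw \<sigma> {..<p + 1} (Lyr p 1 G) \<and>
        (\<forall>i < p + 1. has_abelian_type p (abelianization G (\<sigma> i)) (\<tau> i)))"

end

theory Submission
  imports Defs
begin


definition commt :: "('a,'b) monoid_scheme \<Rightarrow> 'a \<Rightarrow> 'a \<Rightarrow> 'a" where
  "commt G x y = x \<otimes>\<^bsub>G\<^esub> y \<otimes>\<^bsub>G\<^esub> inv\<^bsub>G\<^esub> x \<otimes>\<^bsub>G\<^esub> inv\<^bsub>G\<^esub> y"

context group begin

lemma ca1 [simp]: "x \<in> carrier G \<Longrightarrow> y \<in> carrier G \<Longrightarrow> x \<otimes> (inv x \<otimes> y) = y"
  by (simp add: m_assoc[symmetric])
lemma ca2 [simp]: "x \<in> carrier G \<Longrightarrow> y \<in> carrier G \<Longrightarrow> inv x \<otimes> (x \<otimes> y) = y"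
  by (simp add: m_assoc[symmetric])

lemma commt_closed [simp]: "x \<in> carrier G \<Longrightarrow> y \<in> carrier G \<Longrightarrow> commt G x y \<in> carrier G"
  by (simp add: commt_def)

lemma commt_inv: "x \<in> carrier G \<Longrightarrow> y \<in> carrier G \<Longrightarrow> inv (commt G x y) = commt G y x"
  by (simp add: commt_def inv_mult_group m_assoc)

lemma commt_mult_left: "x \<in> carrier G \<Longrightarrow> y \<in> carrier G \<Longrightarrow> z \<in> carrier G \<Longrightarrow>
   commt G (x \<otimes> y) z = x \<otimes> commt G y z \<otimes> inv x \<otimes> commt G x z"
  by (simp add: commt_def inv_mult_group m_assoc)

lemma commt_inv_left: "x \<in> carrier G \<Longrightarrow> h \<in> carrier G \<Longrightarrow>
   commt G (inv x) h = inv x \<otimes> inv (commt G x h) \<otimes> x"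
  by (simp add: commt_def inv_mult_group m_assoc)

lemma commt_one_left [simp]: "h \<in> carrier G \<Longrightarrow> commt G \<one> h = \<one>"
  by (simp add: commt_def)

lemma commt_one_right [simp]: "h \<in> carrier G \<Longrightarrow> commt G h \<one> = \<one>"
  by (simp add: commt_def)

lemma commt_self [simp]: "h \<in> carrier G \<Longrightarrow> commt G h h = \<one>"
  by (simp add: commt_def m_assoc)

lemma commt_eq_one: "x \<in> carrier G \<Longrightarrow> y \<in> carrier G \<Longrightarrow> commt G x y = \<one> \<longleftrightarrow> x \<otimes> y = y \<otimes> x"
  unfolding commt_def
  by (metis inv_closed inv_mult_group inv_solve_right' m_assoc m_closed r_inv r_one)

lemma card_subgroup_dvd:
  assumes "subgroup A G" "subgroup B G" "A \<subseteq> B"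
  shows "card A dvd card B"
proof -
  interpret B: group "G\<lparr>carrier := B\<rparr>" using subgroup_imp_group assms(2) .
  have "subgroup A (G\<lparr>carrier := B\<rparr>)" using subgroup_incl assms .
  from B.lagrange[OF this] show ?thesis unfolding order_def by (metis dvd_triv_right partial_object.select_convs(1) partial_object.surjective partial_object.update_convs(1))
qed

end

locale metab = group G for G (structure) +
  fixes M
  assumes M_sub: "subgroup M G"
    and M_conj: "\<And>g m. g \<in> carrier G \<Longrightarrow> m \<in> M \<Longrightarrow> g \<otimes> m \<otimes> inv g \<in> M"
    and M_comm: "\<And>x y. x \<in> M \<Longrightarrow> y \<in> M \<Longrightarrow> x \<otimes> y = y \<otimes> x"
    and commt_in: "\<And>x y. x \<in> carrier G \<Longrightarrow> y \<in> carrier G \<Longrightarrow> commt G x y \<in> M"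
begin

lemma Mc [simp]: "x \<in> M \<Longrightarrow> x \<in> carrier G" using subgroup.subset[OF M_sub] by auto
lemma M_mult [simp]: "x \<in> M \<Longrightarrow> y \<in> M \<Longrightarrow> x \<otimes> y \<in> M" using subgroup.m_closed[OF M_sub] by auto
lemma M_inv [simp]: "x \<in> M \<Longrightarrow> inv x \<in> M" using subgroup.m_inv_closed[OF M_sub] by auto
lemma M_one [simp]: "\<one> \<in> M" using subgroup.one_closed[OF M_sub] by auto

lemma M_conj' : "g \<in> carrier G \<Longrightarrow> m \<in> M \<Longrightarrow> inv g \<otimes> m \<otimes> g \<in> M"
  using M_conj[of "inv g" m] by simp

lemma D_hom: assumes e: "e \<in> carrier G" and x: "x \<in> M" and y: "y \<in> M"
  shows "commt G e (x \<otimes> y) = commt G e x \<otimes> commt G e y"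
proof -
  have c: "e \<otimes> x \<otimes> inv e \<in> M" "e \<otimes> y \<otimes> inv e \<in> M" using M_conj e x y by auto
  have 1: "commt G e (x \<otimes> y) = (e \<otimes> x \<otimes> inv e) \<otimes> ((e \<otimes> y \<otimes> inv e) \<otimes> (inv y \<otimes> inv x))"
    using e x y by (simp add: commt_def m_assoc inv_mult_group)
  have 2: "commt G e x \<otimes> commt G e y = (e \<otimes> x \<otimes> inv e) \<otimes> (inv x \<otimes> ((e \<otimes> y \<otimes> inv e) \<otimes> inv y))"
    using e x y by (simp add: commt_def m_assoc)
  have 3: "inv x \<otimes> ((e \<otimes> y \<otimes> inv e) \<otimes> inv y) = (e \<otimes> y \<otimes> inv e) \<otimes> (inv y \<otimes> inv x)"
    using M_comm c x y by (metis M_inv Mc m_assoc)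
  show ?thesis using 1 2 3 by simp
qed

lemma D_inv: assumes e: "e \<in> carrier G" and x: "x \<in> M"
  shows "commt G e (inv x) = inv (commt G e x)"
proof -
  have "commt G e x \<otimes> commt G e (inv x) = \<one>" using D_hom[OF e x, of "inv x"] e x by simp
  then show ?thesis using e x by (metis M_inv Mc commt_closed inv_equality inv_unique r_inv)
qed

lemma K_sub: assumes e: "e \<in> carrier G" shows "subgroup (commt G e ` M) G"
proof (rule subgroupI)
  show "commt G e ` M \<subseteq> carrier G" using e by auto
  show "commt G e ` M \<noteq> {}" using M_one by blast
  show "inv a \<in> commt G e ` M" if a: "a \<in> commt G e ` M" for a
  proof -
    obtain x where x: "x \<in> M" "a = commt G e x" using a by blast
    then show ?thesis using D_inv[OF e x(1)] M_inv[OF x(1)] by (metis imageI)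
  qed
  show "a \<otimes> b \<in> commt G e ` M" if a: "a \<in> commt G e ` M" and b: "b \<in> commt G e ` M" for a b
  proof -
    obtain x where x: "x \<in> M" "a = commt G e x" using a by blast
    obtain y where y: "y \<in> M" "b = commt G e y" using b by blast
    then show ?thesis using D_hom[OF e x(1) y(1)] M_mult[OF x(1) y(1)] x by (metis imageI)
  qed
qed

lemma K_M: "e \<in> carrier G \<Longrightarrow> commt G e ` M \<subseteq> M" using commt_in by auto

lemma D_conj1: assumes e: "e \<in> carrier G" and x: "x \<in> M"
  shows "e \<otimes> commt G e x \<otimes> inv e = commt G e (e \<otimes> x \<otimes> inv e)"
  using e x by (simp add: commt_def m_assoc inv_mult_group)

lemma D_conj2: assumes e: "e \<in> carrier G" and x: "x \<in> M"
  shows "inv e \<otimes> commt G e x \<otimes> e = commt G e (inv e \<otimes> x \<otimes> e)"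
  using e x by (simp add: commt_def m_assoc inv_mult_group)


definition C1 :: "'a set \<Rightarrow> 'a set" where
  "C1 K = {x \<in> carrier G. (\<forall>n\<in>M. commt G x n \<in> K) \<and> (\<forall>k\<in>K. x \<otimes> k \<otimes> inv x \<in> K) \<and> (\<forall>k\<in>K. inv x \<otimes> k \<otimes> x \<in> K)}"

lemma C1_sub: assumes K: "subgroup K G" shows "subgroup (C1 K) G"
proof (rule subgroupI)
  interpret K: subgroup K G by (rule K)
  show "C1 K \<subseteq> carrier G" unfolding C1_def by auto
  show "C1 K \<noteq> {}"
  proof -
    have "\<one> \<in> C1 K" unfolding C1_def using K.subset by (auto simp: subset_iff)
    then show ?thesis by blast
  qed
  show "inv a \<in> C1 K" if a: "a \<in> C1 K" for a
  proof -
    have ac: "a \<in> carrier G" using a unfolding C1_def by auto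
    have "commt G (inv a) n \<in> K" if n: "n \<in> M" for n
    proof -
      have "commt G a n \<in> K" using a n unfolding C1_def by auto
      then have "inv (commt G a n) \<in> K" by simp
      then have "inv a \<otimes> inv (commt G a n) \<otimes> a \<in> K" using a unfolding C1_def by auto
      then show ?thesis using commt_inv_left[OF ac, of n] n by simp
    qed
    then show ?thesis using a ac unfolding C1_def by auto
  qed
  show "a \<otimes> b \<in> C1 K" if a: "a \<in> C1 K" and b: "b \<in> C1 K" for a b
  proof -
    have ac: "a \<in> carrier G" and bc: "b \<in> carrier G" using a b unfolding C1_def by auto
    have 1: "commt G (a \<otimes> b) n \<in> K" if n: "n \<in> M" for n
    proof -
      have "commt G b n \<in> K" using b n unfolding C1_def by auto
      then have "a \<otimes> commt G b n \<otimes> inv a \<in> K" using a unfolding C1_def by auto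
      moreover have "commt G a n \<in> K" using a n unfolding C1_def by auto
      ultimately show ?thesis using commt_mult_left[OF ac bc, of n] n by simp
    qed
    have 2: "a \<otimes> b \<otimes> k \<otimes> inv (a \<otimes> b) \<in> K" if k: "k \<in> K" for k
    proof -
      have "b \<otimes> k \<otimes> inv b \<in> K" using b k unfolding C1_def by auto
      then have "a \<otimes> (b \<otimes> k \<otimes> inv b) \<otimes> inv a \<in> K" using a unfolding C1_def by auto
      then show ?thesis using ac bc k K.subset by (simp add: m_assoc inv_mult_group subset_iff)
    qed
    have 3: "inv (a \<otimes> b) \<otimes> k \<otimes> (a \<otimes> b) \<in> K" if k: "k \<in> K" for k
    proof -
      have "inv a \<otimes> k \<otimes> a \<in> K" using a k unfolding C1_def by auto
      then have "inv b \<otimes> (inv a \<otimes> k \<otimes> a) \<otimes> b \<in> K" using b unfolding C1_def by auto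
      then show ?thesis using ac bc k K.subset by (simp add: m_assoc inv_mult_group subset_iff)
    qed
    show ?thesis using 1 2 3 ac bc unfolding C1_def by auto
  qed
qed

lemma C2_sub: assumes K: "subgroup K G" and h: "h \<in> C1 K"
  shows "subgroup {x \<in> C1 K. commt G x h \<in> K} G"
proof (rule subgroupI)
  interpret K: subgroup K G by (rule K)
  interpret C: subgroup "C1 K" G by (rule C1_sub[OF K])
  have hc: "h \<in> carrier G" using h unfolding C1_def by auto
  show "{x \<in> C1 K. commt G x h \<in> K} \<subseteq> carrier G" using C.subset by auto
  show "{x \<in> C1 K. commt G x h \<in> K} \<noteq> {}" using hc by (metis (mono_tags, lifting) C.one_closed K.one_closed commt_one_left empty_iff mem_Collect_eq)
  show "inv a \<in> {x \<in> C1 K. commt G x h \<in> K}" if a: "a \<in> {x \<in> C1 K. commt G x h \<in> K}" for a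
  proof -
    have ac: "a \<in> carrier G" using a C.subset by auto
    have "inv a \<otimes> inv (commt G a h) \<otimes> a \<in> K" using a unfolding C1_def by auto
    then show ?thesis using a commt_inv_left[OF ac hc] by auto
  qed
  show "a \<otimes> b \<in> {x \<in> C1 K. commt G x h \<in> K}" if a: "a \<in> {x \<in> C1 K. commt G x h \<in> K}" and b: "b \<in> {x \<in> C1 K. commt G x h \<in> K}" for a b
  proof -
    have ac: "a \<in> carrier G" and bc: "b \<in> carrier G" using a b C.subset by auto
    have "a \<otimes> commt G b h \<otimes> inv a \<in> K" using a b unfolding C1_def by auto
    then have "commt G (a \<otimes> b) h \<in> K" using commt_mult_left[OF ac bc hc] a by simp
    then show ?thesis using a b by auto
  qed
qed

lemma derived_in_K:
  assumes e: "e \<in> carrier G"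
    and H: "\<And>S. subgroup S G \<Longrightarrow> e \<in> S \<Longrightarrow> M \<subseteq> S \<Longrightarrow> H \<subseteq> S"
  shows "derived G H \<subseteq> commt G e ` M"
proof -
  define K where "K = commt G e ` M"
  have K: "subgroup K G" unfolding K_def using K_sub[OF e] .
  have KM: "K \<subseteq> M" unfolding K_def using K_M[OF e] .
  have eC1: "e \<in> C1 K"
  proof -
    have "e \<otimes> k \<otimes> inv e \<in> K" if "k \<in> K" for k
      using that D_conj1[OF e] M_conj[OF e] unfolding K_def by auto
    moreover have "inv e \<otimes> k \<otimes> e \<in> K" if "k \<in> K" for k
      using that D_conj2[OF e] M_conj'[OF e] unfolding K_def by auto
    ultimately show ?thesis unfolding C1_def K_def using e by auto
  qed
  have MC1: "M \<subseteq> C1 K"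
  proof
    fix m assume m: "m \<in> M"
    have "commt G m n \<in> K" if "n \<in> M" for n
      using that m M_comm[OF m that] commt_eq_one[of m n] subgroup.one_closed[OF K] by simp
    moreover have "m \<otimes> k \<otimes> inv m = k" if "k \<in> K" for k
      using that m KM M_comm[of m k] by (auto simp: m_assoc)
    moreover have "inv m \<otimes> k \<otimes> m = k" if "k \<in> K" for k
      using that m KM M_comm[of "inv m" k] by (auto simp: m_assoc)
    ultimately show "m \<in> C1 K" unfolding C1_def using m by auto
  qed
  have HC1: "H \<subseteq> C1 K" using H[OF C1_sub[OF K] eC1 MC1] .
  have M2: "M \<subseteq> {x \<in> C1 K. commt G x h \<in> K}" if h: "h \<in> C1 K" for h
  proof
    fix m assume m: "m \<in> M"
    have hc: "h \<in> carrier G" using h unfolding C1_def by auto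
    have "commt G h m \<in> K" using h m unfolding C1_def by auto
    then have "inv (commt G h m) \<in> K" using K by (simp add: subgroup.m_inv_closed)
    then show "m \<in> {x \<in> C1 K. commt G x h \<in> K}" using commt_inv[OF hc, of m] m MC1 by auto
  qed
  have He: "H \<subseteq> {x \<in> C1 K. commt G x e \<in> K}"
    using H[OF C2_sub[OF K eC1] _ M2[OF eC1]] eC1 e subgroup.one_closed[OF K] by simp
  have Hh: "H \<subseteq> {x \<in> C1 K. commt G x h \<in> K}" if h: "h \<in> H" for h
  proof -
    have hc: "h \<in> carrier G" using h HC1 unfolding C1_def by auto
    have "commt G h e \<in> K" using He h by auto
    then have "commt G e h \<in> K" using commt_inv[OF hc e] K by (metis subgroup.m_inv_closed)
    then show ?thesis using H[OF C2_sub[OF K] _ M2] HC1 h eC1 by auto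
  qed
  have "derived_set G H \<subseteq> K"
  proof
    fix z assume "z \<in> derived_set G H"
    then obtain h1 h2 where h: "h1 \<in> H" "h2 \<in> H" "z = h1 \<otimes> h2 \<otimes> inv h1 \<otimes> inv h2" by blast
    then have "commt G h1 h2 \<in> K" using Hh[OF h(2)] by auto
    then show "z \<in> K" using h by (simp add: commt_def)
  qed
  then show ?thesis unfolding derived_def K_def[symmetric] using generate_subgroup_incl[OF _ K] by blast
qed

end


context metab begin

lemma hom_props:
  assumes fM: "\<And>x. x \<in> M \<Longrightarrow> f x \<in> M" and hom: "\<And>x y. x \<in> M \<Longrightarrow> y \<in> M \<Longrightarrow> f (x \<otimes> y) = f x \<otimes> f y"
  shows "f \<one> = \<one>" "\<And>x. x \<in> M \<Longrightarrow> f (inv x) = inv (f x)"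
proof -
  have "f \<one> \<otimes> f \<one> = f \<one>" using hom[of \<one> \<one>] by simp
  then show f1: "f \<one> = \<one>" using fM[of \<one>] by (metis M_one Mc one_closed r_cancel_one')
  fix x assume x: "x \<in> M"
  have "f x \<otimes> f (inv x) = \<one>" using hom[of x "inv x"] x f1 by simp
  then show "f (inv x) = inv (f x)" using x fM by (metis M_inv Mc inv_equality inv_unique r_inv)
qed

lemma card_le_img_ker:
  assumes fin: "finite M"
    and fM: "\<And>x. x \<in> M \<Longrightarrow> f x \<in> M" and hom: "\<And>x y. x \<in> M \<Longrightarrow> y \<in> M \<Longrightarrow> f (x \<otimes> y) = f x \<otimes> f y"
    and N: "N \<subseteq> M"
  shows "card N \<le> card (f ` N) * card {x \<in> M. f x = \<one>}"
proof -
  define s where "s y = (SOME x0. x0 \<in> N \<and> f x0 = y)" for y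
  have s: "s (f x) \<in> N \<and> f (s (f x)) = f x" if "x \<in> N" for x
    unfolding s_def by (rule someI[of _ x]) (use that in auto)
  define \<phi> where "\<phi> x = (f x, inv (s (f x)) \<otimes> x)" for x
  have "inj_on \<phi> N"
  proof (rule inj_onI)
    fix x y assume x: "x \<in> N" and y: "y \<in> N" and e: "\<phi> x = \<phi> y"
    then have "f x = f y" "inv (s (f x)) \<otimes> x = inv (s (f y)) \<otimes> y" unfolding \<phi>_def by auto
    then show "x = y" using x y s[OF x] N by (metis Mc inv_closed l_cancel subsetD)
  qed
  moreover have "\<phi> ` N \<subseteq> f ` N \<times> {x \<in> M. f x = \<one>}"
  proof
    fix z assume "z \<in> \<phi> ` N"
    then obtain x where x: "x \<in> N" "z = \<phi> x" by blast
    have xm: "x \<in> M" and sm: "s (f x) \<in> M" using x s[OF x(1)] N by auto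
    have "f (inv (s (f x)) \<otimes> x) = \<one>"
      using hom[OF M_inv[OF sm] xm] hom_props(2)[OF fM hom sm] s[OF x(1)] xm fM by simp
    then show "z \<in> f ` N \<times> {x \<in> M. f x = \<one>}" using x xm sm unfolding \<phi>_def by auto
  qed
  moreover have "finite (f ` N \<times> {x \<in> M. f x = \<one>})" using fin N by (auto intro: finite_subset)
  ultimately have "card N \<le> card (f ` N \<times> {x \<in> M. f x = \<one>})" by (rule card_inj_on_le)
  then show ?thesis by (simp add: card_cartesian_product)
qed

lemma card_ker_img:
  assumes fin: "finite M"
    and fM: "\<And>x. x \<in> M \<Longrightarrow> f x \<in> M" and hom: "\<And>x y. x \<in> M \<Longrightarrow> y \<in> M \<Longrightarrow> f (x \<otimes> y) = f x \<otimes> f y"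
  shows "card {x \<in> M. f x = \<one>} * card (f ` M) \<le> card M"
proof -
  define s where "s y = (SOME x0. x0 \<in> M \<and> f x0 = y)" for y
  have s: "s y \<in> M \<and> f (s y) = y" if "y \<in> f ` M" for y
    using that unfolding s_def by (metis (mono_tags, lifting) imageE someI)
  define \<psi> where "\<psi> p = s (snd p) \<otimes> fst p" for p
  have "inj_on \<psi> ({x \<in> M. f x = \<one>} \<times> f ` M)"
  proof (rule inj_onI)
    fix p q assume p: "p \<in> {x \<in> M. f x = \<one>} \<times> f ` M" and q: "q \<in> {x \<in> M. f x = \<one>} \<times> f ` M"
      and e: "\<psi> p = \<psi> q"
    have sp: "s (snd p) \<in> M" "f (s (snd p)) = snd p" using s p by auto
    have sq: "s (snd q) \<in> M" "f (s (snd q)) = snd q" using s q by auto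
    have "f (\<psi> p) = snd p" unfolding \<psi>_def using hom[of "s (snd p)" "fst p"] sp p fM by auto
    moreover have "f (\<psi> q) = snd q" unfolding \<psi>_def using hom[of "s (snd q)" "fst q"] sq q fM by auto
    ultimately have "snd p = snd q" using e by simp
    then have "fst p = fst q" using e sp sq p q unfolding \<psi>_def by (auto dest: Mc)
    then show "p = q" using \<open>snd p = snd q\<close> by (simp add: prod_eq_iff)
  qed
  moreover have "\<psi> ` ({x \<in> M. f x = \<one>} \<times> f ` M) \<subseteq> M"
    unfolding \<psi>_def using s by auto
  ultimately have "card ({x \<in> M. f x = \<one>} \<times> f ` M) \<le> card M" using fin by (rule card_inj_on_le)
  then show ?thesis by (simp add: card_cartesian_product)
qed

end


context comm_group begin

lemma canc1: "x \<in> carrier G \<Longrightarrow> y \<in> carrier G \<Longrightarrow> x \<otimes> (y \<otimes> inv x) = y"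
  by (metis inv_closed m_lcomm r_inv r_one)
lemma canc2: "x \<in> carrier G \<Longrightarrow> y \<in> carrier G \<Longrightarrow> z \<in> carrier G \<Longrightarrow> x \<otimes> (y \<otimes> (z \<otimes> inv x)) = y \<otimes> z"
  by (metis canc1 m_assoc m_closed inv_closed)
lemma canc3: "x \<in> carrier G \<Longrightarrow> y \<in> carrier G \<Longrightarrow> inv x \<otimes> (y \<otimes> x) = y"
  by (metis inv_closed m_lcomm l_inv r_one)
lemma canc4: "x \<in> carrier G \<Longrightarrow> y \<in> carrier G \<Longrightarrow> z \<in> carrier G \<Longrightarrow> inv x \<otimes> (y \<otimes> (z \<otimes> x)) = y \<otimes> z"
  by (metis canc3 m_assoc m_closed inv_closed)

lemma ident_core:
  assumes cl: "\<And>x. x \<in> carrier G \<Longrightarrow> \<alpha> x \<in> carrier G" "\<And>x. x \<in> carrier G \<Longrightarrow> \<beta> x \<in> carrier G"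
    and hm: "\<And>x y. x \<in> carrier G \<Longrightarrow> y \<in> carrier G \<Longrightarrow> \<alpha> (x \<otimes> y) = \<alpha> x \<otimes> \<alpha> y"
            "\<And>x y. x \<in> carrier G \<Longrightarrow> y \<in> carrier G \<Longrightarrow> \<beta> (x \<otimes> y) = \<beta> x \<otimes> \<beta> y"
    and cm: "\<And>x. x \<in> carrier G \<Longrightarrow> \<alpha> (\<beta> x) = \<beta> (\<alpha> x)"
    and c3: "\<And>x. x \<in> carrier G \<Longrightarrow> \<alpha> (\<alpha> (\<alpha> x)) = x" "\<And>x. x \<in> carrier G \<Longrightarrow> \<beta> (\<beta> (\<beta> x)) = x"
    and x: "x \<in> carrier G"
  shows "(\<lambda>u. \<alpha> u \<otimes> inv u) ((\<lambda>u. \<beta> u \<otimes> inv u) ((\<lambda>u. \<alpha> (\<beta> u) \<otimes> inv u) ((\<lambda>u. \<alpha> (\<beta> (\<beta> u)) \<otimes> inv u) x))) = \<one>"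
proof -
  have ainv: "\<alpha> (inv u) = inv (\<alpha> u)" if "u \<in> carrier G" for u
  proof -
    have "\<alpha> \<one> = \<one>" using hm(1)[of \<one> \<one>] cl(1)[of \<one>] by (metis l_one one_closed r_cancel_one')
    then have "\<alpha> u \<otimes> \<alpha> (inv u) = \<one>" using hm(1)[of u "inv u"] that by simp
    then show ?thesis using that cl(1) inv_equality[of "\<alpha> (inv u)" "\<alpha> u"] by (simp add: m_comm)
  qed
  have binv: "\<beta> (inv u) = inv (\<beta> u)" if "u \<in> carrier G" for u
  proof -
    have "\<beta> \<one> = \<one>" using hm(2)[of \<one> \<one>] cl(2)[of \<one>] by (metis l_one one_closed r_cancel_one')
    then have "\<beta> u \<otimes> \<beta> (inv u) = \<one>" using hm(2)[of u "inv u"] that by simp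
    then show ?thesis using that cl(2) inv_equality[of "\<beta> (inv u)" "\<beta> u"] by (simp add: m_comm)
  qed
  define N where "N = x \<otimes> \<alpha> x \<otimes> \<alpha> (\<alpha> x)"
  define W where "W = \<alpha> x \<otimes> \<alpha> (\<beta> x) \<otimes> \<alpha> (\<beta> (\<beta> x))"
  define y where "y = (\<lambda>u. \<alpha> (\<beta> u) \<otimes> inv u) ((\<lambda>u. \<alpha> (\<beta> (\<beta> u)) \<otimes> inv u) x)"
  have C: "a \<in> carrier G" if "a \<in> {x, \<alpha> x, \<beta> x, \<alpha> (\<alpha> x), \<alpha> (\<beta> x), \<beta> (\<beta> x), \<alpha> (\<beta> (\<beta> x))}" for a
    using that x cl by auto
  have yc: "y \<in> carrier G" unfolding y_def using x cl by auto
  have y1: "y \<otimes> W = N"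
  proof -
    have "\<alpha> (\<beta> (\<alpha> (\<beta> (\<beta> x)))) = \<alpha> (\<alpha> x)"
      using cm c3 x cl by (metis)
    then have "y = \<alpha> (\<alpha> x) \<otimes> inv (\<alpha> (\<beta> x)) \<otimes> inv (\<alpha> (\<beta> (\<beta> x))) \<otimes> x"
      unfolding y_def using x cl hm ainv binv by (simp add: inv_mult m_ac)
    then show ?thesis unfolding W_def N_def using C
      by (simp add: m_ac inv_mult)
  qed
  have Wc: "W \<in> carrier G" and Nc: "N \<in> carrier G" unfolding W_def N_def using x cl by auto
  have bW: "\<beta> W = W" unfolding W_def using x cl hm cm c3 by (simp add: m_ac)
  have aN: "\<alpha> N = N" unfolding N_def using x cl hm cm c3 by (simp add: m_ac)
  have abN: "\<alpha> (\<beta> N) = \<beta> N" using cm[OF Nc] aN by simp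
  have yN: "y = N \<otimes> inv W" using y1 yc Wc Nc by (metis inv_solve_right)
  have "\<beta> y \<otimes> inv y = \<beta> N \<otimes> inv N" unfolding yN using Wc Nc cl binv hm bW by (simp add: inv_mult m_ac canc1 canc2 canc3 canc4)
  moreover have "\<alpha> (\<beta> N \<otimes> inv N) \<otimes> inv (\<beta> N \<otimes> inv N) = \<one>"
    using Nc cl hm ainv aN abN by (simp add: inv_mult m_ac canc1 canc2 canc3 canc4)
  ultimately show ?thesis unfolding y_def[symmetric] by simp
qed
end

context metab begin

lemma ident:
  assumes a: "a \<in> carrier G" and b: "b \<in> carrier G" and a3: "a [^] (3::nat) \<in> M" and b3: "b [^] (3::nat) \<in> M"
    and x: "x \<in> M"
  shows "commt G a (commt G b (commt G (a \<otimes> b) (commt G (a \<otimes> b \<otimes> b) x))) = \<one>"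
proof -
  interpret MG: comm_group "G\<lparr>carrier := M\<rparr>"
    using group.group_comm_groupI[OF subgroup_imp_group[OF M_sub]] M_comm by simp
  define \<alpha> where "\<alpha> u = a \<otimes> u \<otimes> inv a" for u
  define \<beta> where "\<beta> u = b \<otimes> u \<otimes> inv b" for u
  have cl: "\<alpha> u \<in> M" "\<beta> u \<in> M" if "u \<in> M" for u using that M_conj a b unfolding \<alpha>_def \<beta>_def by auto
  have hm: "\<alpha> (u \<otimes> v) = \<alpha> u \<otimes> \<alpha> v" "\<beta> (u \<otimes> v) = \<beta> u \<otimes> \<beta> v" if "u \<in> M" "v \<in> M" for u v
    using that a b unfolding \<alpha>_def \<beta>_def by (simp_all add: m_assoc)
  have cm: "\<alpha> (\<beta> u) = \<beta> (\<alpha> u)" if u: "u \<in> M" for u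
  proof -
    define c where "c = commt G a b"
    have c: "c \<in> M" unfolding c_def using commt_in a b by simp
    have ab: "a \<otimes> b = c \<otimes> (b \<otimes> a)" unfolding c_def commt_def using a b by (simp add: m_assoc)
    have "\<alpha> (\<beta> u) = (a \<otimes> b) \<otimes> u \<otimes> inv (a \<otimes> b)" unfolding \<alpha>_def \<beta>_def using a b u by (simp add: m_assoc inv_mult_group)
    also have "\<dots> = c \<otimes> ((b \<otimes> a) \<otimes> u \<otimes> inv (b \<otimes> a)) \<otimes> inv c" unfolding ab using a b u c by (simp add: m_assoc inv_mult_group)
    also have "\<dots> = (b \<otimes> a) \<otimes> u \<otimes> inv (b \<otimes> a)"
    proof -
      have w: "(b \<otimes> a) \<otimes> u \<otimes> inv (b \<otimes> a) \<in> M" using M_conj[of "b \<otimes> a" u] a b u by simp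
      show ?thesis using M_comm[OF c w] c w by (simp add: m_assoc)
    qed
    also have "\<dots> = \<beta> (\<alpha> u)" unfolding \<alpha>_def \<beta>_def using a b u by (simp add: m_assoc inv_mult_group)
    finally show ?thesis .
  qed
  have cube: "g \<otimes> (g \<otimes> (g \<otimes> u \<otimes> inv g) \<otimes> inv g) \<otimes> inv g = u" if g: "g \<in> carrier G" and g3: "g [^] (3::nat) \<in> M" and u: "u \<in> M" for g u
  proof -
    have e: "g [^] (3::nat) = g \<otimes> g \<otimes> g" using g by (simp add: numeral_3_eq_3)
    have "g \<otimes> (g \<otimes> (g \<otimes> u \<otimes> inv g) \<otimes> inv g) \<otimes> inv g = g [^] (3::nat) \<otimes> u \<otimes> inv (g [^] (3::nat))"
      unfolding e using g u by (simp add: m_assoc inv_mult_group)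
    also have "\<dots> = u" using M_comm[OF g3 u] g3 u by (simp add: m_assoc)
    finally show ?thesis .
  qed
  have c3: "\<alpha> (\<alpha> (\<alpha> u)) = u" "\<beta> (\<beta> (\<beta> u)) = u" if "u \<in> M" for u
    unfolding \<alpha>_def \<beta>_def using cube[OF a a3 that] cube[OF b b3 that] .
  let ?C = "carrier (G\<lparr>carrier := M\<rparr>)"
  have p1: "\<And>u. u \<in> ?C \<Longrightarrow> \<alpha> u \<in> ?C" "\<And>u. u \<in> ?C \<Longrightarrow> \<beta> u \<in> ?C" using cl by simp_all
  have p2: "\<And>u v. u \<in> ?C \<Longrightarrow> v \<in> ?C \<Longrightarrow> \<alpha> (u \<otimes>\<^bsub>G\<lparr>carrier := M\<rparr>\<^esub> v) = \<alpha> u \<otimes>\<^bsub>G\<lparr>carrier := M\<rparr>\<^esub> \<alpha> v"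
      "\<And>u v. u \<in> ?C \<Longrightarrow> v \<in> ?C \<Longrightarrow> \<beta> (u \<otimes>\<^bsub>G\<lparr>carrier := M\<rparr>\<^esub> v) = \<beta> u \<otimes>\<^bsub>G\<lparr>carrier := M\<rparr>\<^esub> \<beta> v"
    using hm by simp_all
  have p3: "\<And>u. u \<in> ?C \<Longrightarrow> \<alpha> (\<beta> u) = \<beta> (\<alpha> u)" using cm by simp
  have p4: "\<And>u. u \<in> ?C \<Longrightarrow> \<alpha> (\<alpha> (\<alpha> u)) = u" "\<And>u. u \<in> ?C \<Longrightarrow> \<beta> (\<beta> (\<beta> u)) = u" using c3 by simp_all
  have p5: "x \<in> ?C" using x by simp
  note core = MG.ident_core[OF p1 p2 p3 p4 p5]
  have invc: "inv\<^bsub>G\<lparr>carrier := M\<rparr>\<^esub> u = inv u" if "u \<in> M" for u using m_inv_consistent[OF M_sub that] .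
  define z4 where "z4 = \<alpha> (\<beta> (\<beta> x)) \<otimes> inv x"
  define z3 where "z3 = \<alpha> (\<beta> z4) \<otimes> inv z4"
  define z2 where "z2 = \<beta> z3 \<otimes> inv z3"
  have z4M: "z4 \<in> M" unfolding z4_def using cl x by simp
  have z3M: "z3 \<in> M" unfolding z3_def using cl z4M by simp
  have z2M: "z2 \<in> M" unfolding z2_def using cl z3M by simp
  have core2: "\<alpha> z2 \<otimes> inv z2 = \<one>"
  proof -
    have i4: "inv\<^bsub>G\<lparr>carrier := M\<rparr>\<^esub> x = inv x" using invc x .
    have i3: "inv\<^bsub>G\<lparr>carrier := M\<rparr>\<^esub> z4 = inv z4" using invc z4M .
    have i2: "inv\<^bsub>G\<lparr>carrier := M\<rparr>\<^esub> z3 = inv z3" using invc z3M .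
    have i1: "inv\<^bsub>G\<lparr>carrier := M\<rparr>\<^esub> z2 = inv z2" using invc z2M .
    have "\<alpha> (\<beta> (\<beta> x)) \<otimes>\<^bsub>G\<lparr>carrier := M\<rparr>\<^esub> inv\<^bsub>G\<lparr>carrier := M\<rparr>\<^esub> x = z4" unfolding z4_def i4 by simp
    moreover have "\<alpha> (\<beta> z4) \<otimes>\<^bsub>G\<lparr>carrier := M\<rparr>\<^esub> inv\<^bsub>G\<lparr>carrier := M\<rparr>\<^esub> z4 = z3" unfolding z3_def i3 by simp
    moreover have "\<beta> z3 \<otimes>\<^bsub>G\<lparr>carrier := M\<rparr>\<^esub> inv\<^bsub>G\<lparr>carrier := M\<rparr>\<^esub> z3 = z2" unfolding z2_def i2 by simp
    moreover have "\<alpha> z2 \<otimes>\<^bsub>G\<lparr>carrier := M\<rparr>\<^esub> inv\<^bsub>G\<lparr>carrier := M\<rparr>\<^esub> z2 = \<alpha> z2 \<otimes> inv z2" unfolding i1 by simp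
    ultimately show ?thesis using core by simp
  qed
  have e4: "commt G (a \<otimes> b \<otimes> b) x = z4" unfolding z4_def \<alpha>_def \<beta>_def commt_def using a b x by (simp add: m_assoc inv_mult_group)
  have e3: "commt G (a \<otimes> b) z4 = z3" unfolding z3_def \<alpha>_def \<beta>_def commt_def using a b z4M by (simp add: m_assoc inv_mult_group)
  have e2: "commt G b z3 = z2" unfolding z2_def \<beta>_def commt_def using b z3M by (simp add: m_assoc)
  have e1: "commt G a z2 = \<alpha> z2 \<otimes> inv z2" unfolding \<alpha>_def commt_def using a z2M by (simp add: m_assoc)
  show ?thesis using e4 e3 e2 e1 core2 by simp
qed

end

lemma product_group_cong: "(\<And>i. i \<in> I \<Longrightarrow> G i = H i) \<Longrightarrow> product_group I G = product_group I H"
  unfolding product_group_def by (simp cong: PiE_cong restrict_cong)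
lemma cyc11_eq: "cyc_prod 3 {#1, 1#} = product_group {..<2} (\<lambda>i. integer_mod_group 3)"
proof -
  have s: "sorted_list_of_multiset {#1::nat, 1#} = [1, 1]" by simp
  have sz: "size {#1::nat, 1#} = 2" by simp
  show ?thesis unfolding cyc_prod_def s sz
    by (rule product_group_cong) (auto simp: less_2_cases_iff)
qed
lemma cyc11_carrier: "carrier (cyc_prod 3 {#1, 1#}) = (\<Pi>\<^sub>E i\<in>{..<2}. {0..<3})"
  unfolding cyc11_eq by (simp add: carrier_integer_mod_group)
lemma cyc11_card: "card (carrier (cyc_prod 3 {#1, 1#})) = 9"
  unfolding cyc11_carrier by (simp add: card_PiE)
lemma cyc_group: "group (cyc_prod p t)"
  unfolding cyc_prod_def by (rule product_group) simp

lemma (in monoid) pow3: "x \<in> carrier G \<Longrightarrow> x [^] (3::nat) = x \<otimes> x \<otimes> x"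
  by (simp add: numeral_3_eq_3)

lemma prod_cube:
  assumes yy: "y \<in> (\<Pi>\<^sub>E i\<in>{..<2::nat}. {0..<3::int})"
  shows "y \<otimes>\<^bsub>product_group {..<2::nat} (\<lambda>i. integer_mod_group 3)\<^esub> y \<otimes>\<^bsub>product_group {..<2::nat} (\<lambda>i. integer_mod_group 3)\<^esub> y
    = \<one>\<^bsub>product_group {..<2::nat} (\<lambda>i. integer_mod_group 3)\<^esub>"
proof -
  have "y \<otimes>\<^bsub>product_group {..<2::nat} (\<lambda>i. integer_mod_group 3)\<^esub> y \<otimes>\<^bsub>product_group {..<2::nat} (\<lambda>i. integer_mod_group 3)\<^esub> y
     = (\<lambda>i\<in>{..<2}. ((y i + y i) mod 3 + y i) mod 3)"
    by (simp only: mult_product_group mult_integer_mod_group of_nat_numeral) (rule restrict_ext, simp)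
  also have "\<dots> = (\<lambda>i\<in>{..<2}. 0)"
  proof (rule restrict_ext)
    fix i
    have "((y i + y i) mod 3 + y i) mod 3 = (y i + y i + y i) mod (3::int)" by (simp add: mod_add_left_eq)
    also have "\<dots> = (3 * y i) mod 3" by (simp add: algebra_simps)
    finally show "((y i + y i) mod 3 + y i) mod 3 = 0" by simp
  qed
  also have "\<dots> = \<one>\<^bsub>product_group {..<2::nat} (\<lambda>i. integer_mod_group 3)\<^esub>" by (simp only: one_product_group one_integer_mod_group)
  finally show ?thesis .
qed

lemma cyc11_cube:
  assumes y: "y \<in> carrier (cyc_prod 3 {#1, 1#})"
  shows "y [^]\<^bsub>cyc_prod 3 {#1, 1#}\<^esub> (3::nat) = \<one>\<^bsub>cyc_prod 3 {#1, 1#}\<^esub>"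
proof -
  interpret P: group "cyc_prod 3 {#1, 1#}" by (rule cyc_group)
  have yy: "y \<in> (\<Pi>\<^sub>E i\<in>{..<2}. {0..<3})" using y cyc11_carrier by simp
  have "y [^]\<^bsub>cyc_prod 3 {#1, 1#}\<^esub> (3::nat) = y \<otimes>\<^bsub>cyc_prod 3 {#1, 1#}\<^esub> y \<otimes>\<^bsub>cyc_prod 3 {#1, 1#}\<^esub> y"
    using y by (rule P.pow3)
  also have "\<dots> = \<one>\<^bsub>cyc_prod 3 {#1, 1#}\<^esub>" unfolding cyc11_eq by (rule prod_cube[OF yy])
  finally show ?thesis .
qed



lemma (in group) card_bound:
  assumes C: "Cnt_cond 3 \<tau> G"
  shows "card (carrier G) \<le> 9 * (\<Sum>i<4. card (carrier (cyc_prod 3 (\<tau> i)))) ^ 4"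
proof -
  define Cb where "Cb = (\<Sum>i<4. card (carrier (cyc_prod 3 (\<tau> i))))"
  obtain \<sigma> where grp: "group G" and fin: "finite (carrier G)" and met: "metabelian G"
    and ab: "has_abelian_type 3 (abelianization G (carrier G)) {#1, 1#}"
    and sig: "bij_betw \<sigma> {..<4} (Lyr 3 1 G)"
    and ht: "\<And>i. i < 4 \<Longrightarrow> has_abelian_type 3 (abelianization G (\<sigma> i)) (\<tau> i)"
    using C unfolding Cnt_cond_def by auto
  define M where "M = derived G (carrier G)"
  have Msub: "subgroup M G" unfolding M_def by (rule derived_is_subgroup) simp
  have Mnorm: "M \<lhd> G" unfolding M_def by (rule derived_self_is_normal)
  have Mconj: "\<And>g m. g \<in> carrier G \<Longrightarrow> m \<in> M \<Longrightarrow> g \<otimes> m \<otimes> inv g \<in> M"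
    using Mnorm normal_inv_iff by blast
  have cin: "commt G x y \<in> M" if "x \<in> carrier G" "y \<in> carrier G" for x y
  proof -
    have "commt G x y \<in> derived_set G (carrier G)" unfolding commt_def using that by blast
    then show ?thesis unfolding M_def derived_def by (rule generate.incl)
  qed
  have Mc: "x \<in> M \<Longrightarrow> x \<in> carrier G" for x using subgroup.subset[OF Msub] by auto
  have Mcomm: "x \<otimes> y = y \<otimes> x" if xy: "x \<in> M" "y \<in> M" for x y
  proof -
    have "commt G x y \<in> derived_set G M" unfolding commt_def using xy by blast
    then have "commt G x y \<in> derived G M" unfolding derived_def by (rule generate.incl)
    then have "commt G x y = \<one>" using met unfolding metabelian_def M_def by simp
    then show ?thesis using commt_eq_one Mc xy by blast
  qed
  have "metab G M" unfolding metab_def metab_axioms_def using grp Msub Mconj Mcomm cin by blast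
  then interpret metab G M .
  have finM: "finite M" using fin finite_subset subgroup.subset[OF Msub] by blast
  have m0: "card M > 0" using finM M_one card_gt_0_iff by blast
  interpret N: normal M G by (rule Mnorm)
  have ModC: "carrier (G Mod M) = rcosets M" by (simp add: FactGroup_def)
  have abe: "abelianization G (carrier G) = G Mod M" unfolding abelianization_def M_def by simp
  obtain \<phi> where phi: "\<phi> \<in> iso (G Mod M) (cyc_prod 3 {#1, 1#})"
    using ab unfolding has_abelian_type_def abe is_iso_def by blast
  have c9: "card (rcosets M) = 9"
    using iso_same_card[of "G Mod M" "cyc_prod 3 {#1, 1#}"] phi cyc11_card ModC unfolding is_iso_def by auto
  have cardG: "card (carrier G) = 9 * card M"
    using lagrange[OF Msub] c9 unfolding order_def by simp
  have cube: "g [^] (3::nat) \<in> M" if g: "g \<in> carrier G" for g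
  proof -
    have Gq: "group (G Mod M)" by (rule N.factorgroup_is_group)
    have X: "M #> g \<in> carrier (G Mod M)" using rcosetsI[OF subgroup.subset[OF Msub] g] ModC by simp
    have hom: "\<phi> \<in> hom (G Mod M) (cyc_prod 3 {#1, 1#})" using phi unfolding iso_def by simp
    have "\<phi> ((M #> g) [^]\<^bsub>G Mod M\<^esub> (3::nat)) = \<phi> (M #> g) [^]\<^bsub>cyc_prod 3 {#1, 1#}\<^esub> (3::nat)"
      using hom_nat_pow[OF hom X Gq cyc_group] .
    also have "\<dots> = \<one>\<^bsub>cyc_prod 3 {#1, 1#}\<^esub>"
      using cyc11_cube hom X unfolding hom_def by (simp add: Pi_iff)
    also have "\<dots> = \<phi> \<one>\<^bsub>G Mod M\<^esub>" using hom_one[OF hom Gq cyc_group] by simp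
    finally have "\<phi> ((M #> g) [^]\<^bsub>G Mod M\<^esub> (3::nat)) = \<phi> \<one>\<^bsub>G Mod M\<^esub>" .
    moreover have "inj_on \<phi> (carrier (G Mod M))" using phi unfolding iso_def bij_betw_def by simp
    moreover have "(M #> g) [^]\<^bsub>G Mod M\<^esub> (3::nat) \<in> carrier (G Mod M)"
      using monoid.nat_pow_closed[OF group.is_monoid[OF Gq] X] .
    ultimately have "(M #> g) [^]\<^bsub>G Mod M\<^esub> (3::nat) = \<one>\<^bsub>G Mod M\<^esub>"
      using monoid.one_closed[OF group.is_monoid[OF Gq]] by (meson inj_onD)
    then have "M #> (g [^] (3::nat)) = M" using N.FactGroup_pow[OF g] by simp
    then show ?thesis using rcos_self[OF nat_pow_closed[OF g, of "3::nat"] Msub] by simp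
  qed
  have Lyr: "subgroup H G" "M \<subseteq> H" "card H = 3 * card M" if H: "H \<in> Lyr 3 1 G" for H
  proof -
    show sH: "subgroup H G" and "M \<subseteq> H" using H unfolding Lyr_def M_def by auto
    have "card (rcosets H) = 3" using H unfolding Lyr_def by auto
    then show "card H = 3 * card M" using lagrange[OF sH] cardG unfolding order_def by simp
  qed
  have gen: "H \<subseteq> S" if H: "H \<in> Lyr 3 1 G" and e: "e \<in> H" "e \<notin> M" and S: "subgroup S G" "e \<in> S" "M \<subseteq> S" for H S e
  proof -
    define T where "T = S \<inter> H"
    have sT: "subgroup T G" unfolding T_def using subgroups_Inter_pair[OF S(1) Lyr(1)[OF H]] .
    have MT: "M \<subseteq> T" unfolding T_def using S Lyr(2)[OF H] by auto
    have TH: "T \<subseteq> H" unfolding T_def by auto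
    have finH: "finite H" using fin subgroup.subset[OF Lyr(1)[OF H]] finite_subset by blast
    have finT: "finite T" using finH TH finite_subset by blast
    obtain u where u: "card T = card M * u" using card_subgroup_dvd[OF Msub sT MT] by (auto elim: dvdE)
    obtain v where v: "card H = card T * v" using card_subgroup_dvd[OF sT Lyr(1)[OF H] TH] by (auto elim: dvdE)
    have uv: "u * v = 3" using u v Lyr(3)[OF H] m0 by (simp add: mult.assoc)
    have "M \<subset> T" using MT e S unfolding T_def by auto
    then have "card M < card T" using finT psubset_card_mono by blast
    then have "u \<noteq> 1" using u by auto
    moreover have "u dvd 3" using uv by (metis dvd_triv_left)
    ultimately have "u = 3"
    proof -
      have "u \<le> 3" using \<open>u dvd 3\<close> by (simp add: dvd_imp_le)
      then have "u = 0 \<or> u = 1 \<or> u = 2 \<or> u = 3" by auto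
      then show ?thesis using \<open>u \<noteq> 1\<close> \<open>u dvd 3\<close> by auto
    qed
    then have "card T = card H" using u Lyr(3)[OF H] by simp
    then have "T = H" using card_subset_eq[OF finH TH] by simp
    then show ?thesis unfolding T_def by auto
  qed
  have kerb: "3 * card {x \<in> M. commt G e x = \<one>} \<le> card (carrier (abelianization G H))"
    if H: "H \<in> Lyr 3 1 G" and e: "e \<in> H" "e \<notin> M" for H e
  proof -
    have sH: "subgroup H G" by (rule Lyr(1)[OF H])
    have ec: "e \<in> carrier G" using e sH subgroup.subset by blast
    have Hs: "H \<subseteq> carrier G" using sH subgroup.subset by blast
    have D: "derived G H \<subseteq> commt G e ` M"
      using derived_in_K[OF ec] gen[OF H e] by blast
    interpret GH: group "G\<lparr>carrier := H\<rparr>" using subgroup_imp_group[OF sH] .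
    have sD: "subgroup (derived G H) (G\<lparr>carrier := H\<rparr>)"
      using subgroup_incl[OF derived_is_subgroup[OF Hs] sH derived_incl[OF _ sH]] by simp
    have lag: "card (carrier (abelianization G H)) * card (derived G H) = card H"
      using GH.lagrange[OF sD] unfolding abelianization_def order_def by (simp add: FactGroup_def)
    have finK: "finite (commt G e ` M)" using finM by simp
    have h1: "card (derived G H) \<le> card (commt G e ` M)" using card_mono[OF finK D] .
    have h2: "card {x \<in> M. commt G e x = \<one>} * card (commt G e ` M) \<le> card M"
      using card_ker_img[OF finM, of "commt G e"] K_M[OF ec] D_hom[OF ec] by blast
    have h3: "card (derived G H) > 0"
    proof -
      have "finite (derived G H)" using D finK finite_subset by blast
      moreover have "\<one> \<in> derived G H" using subgroup.one_closed[OF derived_is_subgroup[OF Hs]] by simp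
      ultimately show ?thesis using card_gt_0_iff by blast
    qed
    define A where "A = card (carrier (abelianization G H))"
    define k where "k = card {x \<in> M. commt G e x = \<one>}"
    define h where "h = card (derived G H)"
    define c where "c = card (commt G e ` M)"
    have "3 * k * h \<le> 3 * k * c" using h1 unfolding h_def c_def by simp
    also have "\<dots> \<le> 3 * card M" using h2 unfolding k_def c_def by simp
    also have "\<dots> = A * h" using lag Lyr(3)[OF H] unfolding A_def h_def by simp
    finally have "3 * k * h \<le> A * h" .
    then have "3 * k \<le> A" using h3 unfolding h_def by simp
    then show ?thesis unfolding A_def k_def .
  qed
  have sinj: "inj_on \<sigma> {..<4}" using sig bij_betw_def by blast
  have sL: "\<sigma> i \<in> Lyr 3 1 G" if "i < 4" for i using sig that bij_betwE by blast
  have disj: "\<sigma> i \<inter> \<sigma> j = M" if ij: "i < 4" "j < 4" "i \<noteq> j" for i j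
  proof (rule ccontr)
    assume ne: "\<sigma> i \<inter> \<sigma> j \<noteq> M"
    have "M \<subseteq> \<sigma> i \<inter> \<sigma> j" using Lyr(2)[OF sL] ij by auto
    then obtain e where e: "e \<in> \<sigma> i" "e \<in> \<sigma> j" "e \<notin> M" using ne by blast
    have "\<sigma> i \<subseteq> \<sigma> j" using gen[OF sL[OF ij(1)] e(1) e(3) Lyr(1)[OF sL[OF ij(2)]] e(2) Lyr(2)[OF sL[OF ij(2)]]] .
    moreover have "\<sigma> j \<subseteq> \<sigma> i" using gen[OF sL[OF ij(2)] e(2) e(3) Lyr(1)[OF sL[OF ij(1)]] e(1) Lyr(2)[OF sL[OF ij(1)]]] .
    ultimately have "\<sigma> i = \<sigma> j" by blast
    then show False using sinj ij unfolding inj_on_def by blast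
  qed
  have cover: "\<exists>i<4. g \<in> \<sigma> i" if g: "g \<in> carrier G" for g
  proof -
    define U where "U = M \<union> (\<Union>i\<in>{..<4}. \<sigma> i - M)"
    have fs: "finite (\<sigma> i)" if "i < 4" for i
      using fin subgroup.subset[OF Lyr(1)[OF sL[OF that]]] finite_subset by blast
    have c2: "card (\<sigma> i - M) = 2 * card M" if "i < 4" for i
      using card_Diff_subset[OF finM Lyr(2)[OF sL[OF that]]] Lyr(3)[OF sL[OF that]] by simp
    have "card (\<Union>i\<in>{..<4}. \<sigma> i - M) = (\<Sum>i<4. card (\<sigma> i - M))"
      by (rule card_UN_disjoint) (use fs disj in auto)
    also have "\<dots> = 8 * card M" using c2 by simp
    finally have cU1: "card (\<Union>i\<in>{..<4}. \<sigma> i - M) = 8 * card M" .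
    have "card U = card M + card (\<Union>i\<in>{..<4}. \<sigma> i - M)"
      unfolding U_def by (rule card_Un_disjoint) (use finM fs in auto)
    then have cU: "card U = card (carrier G)" using cU1 cardG by simp
    have "U \<subseteq> carrier G" unfolding U_def using Mc subgroup.subset[OF Lyr(1)[OF sL]] by blast
    then have "U = carrier G" using cU fin card_subset_eq by blast
    then have "g \<in> M \<or> (\<exists>i<4. g \<in> \<sigma> i)" using g unfolding U_def by blast
    moreover have "M \<subseteq> \<sigma> 0" using Lyr(2)[OF sL[of 0]] by simp
    ultimately show ?thesis by (metis subsetD zero_less_numeral)
  qed
  have kb: "card {x \<in> M. commt G e x = \<one>} \<le> Cb" if e: "e \<in> carrier G" "e \<notin> M" for e
  proof -
    obtain i where i: "i < 4" "e \<in> \<sigma> i" using cover[OF e(1)] by blast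
    have "3 * card {x \<in> M. commt G e x = \<one>} \<le> card (carrier (abelianization G (\<sigma> i)))"
      using kerb[OF sL[OF i(1)] i(2) e(2)] .
    also have "\<dots> = card (carrier (cyc_prod 3 (\<tau> i)))"
      using ht[OF i(1)] iso_same_card unfolding has_abelian_type_def by blast
    also have "\<dots> \<le> Cb" unfolding Cb_def using i(1) by (intro member_le_sum) auto
    finally show ?thesis by simp
  qed
  have ex: "\<exists>x. x \<in> \<sigma> i \<and> x \<notin> M" if i: "i < 4" for i
  proof (rule ccontr)
    assume "\<not> ?thesis"
    then have "\<sigma> i \<subseteq> M" by blast
    then have "card (\<sigma> i) \<le> card M" using card_mono[OF finM] by blast
    then show False using Lyr(3)[OF sL[OF i]] m0 by simp
  qed
  obtain a where a: "a \<in> \<sigma> 0" "a \<notin> M" using ex[of 0] by auto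
  obtain b where b: "b \<in> \<sigma> 1" "b \<notin> M" using ex[of 1] by auto
  have s0: "subgroup (\<sigma> 0) G" and s1: "subgroup (\<sigma> 1) G" using Lyr(1)[OF sL] by auto
  have M0: "M \<subseteq> \<sigma> 0" using Lyr(2)[OF sL] by auto
  have ac: "a \<in> carrier G" using a s0 subgroup.subset by blast
  have bc: "b \<in> carrier G" using b s1 subgroup.subset by blast
  have d01: "\<sigma> 0 \<inter> \<sigma> 1 = M" using disj[of 0 1] by simp
  have abM: "a \<otimes> b \<notin> M"
  proof
    assume "a \<otimes> b \<in> M"
    then have "inv a \<otimes> (a \<otimes> b) \<in> \<sigma> 0" using M0 a s0 by (meson subgroup.m_closed subgroup.m_inv_closed subsetD)
    then have "b \<in> \<sigma> 0" using ac bc by (simp add: m_assoc[symmetric])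
    then show False using b d01 by blast
  qed
  have abbM: "a \<otimes> b \<otimes> b \<notin> M"
  proof
    assume "a \<otimes> b \<otimes> b \<in> M"
    then have "inv a \<otimes> (a \<otimes> b \<otimes> b) \<in> \<sigma> 0" using M0 a s0 by (meson subgroup.m_closed subgroup.m_inv_closed subsetD)
    then have bb: "b \<otimes> b \<in> \<sigma> 0" using ac bc by (simp add: m_assoc)
    have "b [^] (3::nat) \<in> \<sigma> 0" using cube[OF bc] M0 by blast
    then have "inv (b \<otimes> b) \<otimes> (b \<otimes> b \<otimes> b) \<in> \<sigma> 0" using bb s0 pow3[OF bc]
      by (metis subgroup.m_closed subgroup.m_inv_closed)
    moreover have "inv (b \<otimes> b) \<otimes> (b \<otimes> b \<otimes> b) = b" using bc by (metis l_inv l_one m_assoc m_closed inv_closed)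
    ultimately have "b \<in> \<sigma> 0" by simp
    then show False using b d01 by blast
  qed
  have abc: "a \<otimes> b \<in> carrier G" and abbc: "a \<otimes> b \<otimes> b \<in> carrier G" using ac bc by auto
  define f1 where "f1 = commt G a"
  define f2 where "f2 = commt G b"
  define f3 where "f3 = commt G (a \<otimes> b)"
  define f4 where "f4 = commt G (a \<otimes> b \<otimes> b)"
  have fM: "f x \<in> M" if "f \<in> {f1, f2, f3, f4}" "x \<in> M" for f x
    using that commt_in ac bc abc abbc Mc unfolding f1_def f2_def f3_def f4_def by auto
  have fh: "f (x \<otimes> y) = f x \<otimes> f y" if "f \<in> {f1, f2, f3, f4}" "x \<in> M" "y \<in> M" for f x y
    using that D_hom ac bc abc abbc unfolding f1_def f2_def f3_def f4_def by auto
  define N4 where "N4 = f4 ` M"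
  define N3 where "N3 = f3 ` N4"
  define N2 where "N2 = f2 ` N3"
  define N1 where "N1 = f1 ` N2"
  have N4M: "N4 \<subseteq> M" unfolding N4_def using fM by auto
  have N3M: "N3 \<subseteq> M" unfolding N3_def using fM N4M by auto
  have N2M: "N2 \<subseteq> M" unfolding N2_def using fM N3M by auto
  have N1: "N1 \<subseteq> {\<one>}"
  proof
    fix z assume "z \<in> N1"
    then obtain x where x: "x \<in> M" "z = f1 (f2 (f3 (f4 x)))" unfolding N1_def N2_def N3_def N4_def by blast
    then show "z \<in> {\<one>}" using ident[OF ac bc cube[OF ac] cube[OF bc] x(1)] unfolding f1_def f2_def f3_def f4_def by simp
  qed
  have cN1: "card N1 \<le> 1" using card_mono[OF _ N1] by simp
  have fM1: "\<And>x. x \<in> M \<Longrightarrow> f1 x \<in> M" and fM2: "\<And>x. x \<in> M \<Longrightarrow> f2 x \<in> M"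
    and fM3: "\<And>x. x \<in> M \<Longrightarrow> f3 x \<in> M" and fM4: "\<And>x. x \<in> M \<Longrightarrow> f4 x \<in> M" using fM by blast+
  have fh1: "\<And>x y. x \<in> M \<Longrightarrow> y \<in> M \<Longrightarrow> f1 (x \<otimes> y) = f1 x \<otimes> f1 y"
    and fh2: "\<And>x y. x \<in> M \<Longrightarrow> y \<in> M \<Longrightarrow> f2 (x \<otimes> y) = f2 x \<otimes> f2 y"
    and fh3: "\<And>x y. x \<in> M \<Longrightarrow> y \<in> M \<Longrightarrow> f3 (x \<otimes> y) = f3 x \<otimes> f3 y"
    and fh4: "\<And>x y. x \<in> M \<Longrightarrow> y \<in> M \<Longrightarrow> f4 (x \<otimes> y) = f4 x \<otimes> f4 y" using fh by blast+
  define k1 where "k1 = card {x \<in> M. f1 x = \<one>}"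
  define k2 where "k2 = card {x \<in> M. f2 x = \<one>}"
  define k3 where "k3 = card {x \<in> M. f3 x = \<one>}"
  define k4 where "k4 = card {x \<in> M. f4 x = \<one>}"
  have i4: "card M \<le> card N4 * k4" unfolding N4_def k4_def
    by (rule card_le_img_ker[OF finM fM4 fh4 subset_refl])
  have i3: "card N4 \<le> card N3 * k3" unfolding N3_def k3_def
    by (rule card_le_img_ker[OF finM fM3 fh3 N4M])
  have i2: "card N3 \<le> card N2 * k2" unfolding N2_def k2_def
    by (rule card_le_img_ker[OF finM fM2 fh2 N3M])
  have i1: "card N2 \<le> card N1 * k1" unfolding N1_def k1_def
    by (rule card_le_img_ker[OF finM fM1 fh1 N2M])
  have kb1: "k1 \<le> Cb" unfolding k1_def f1_def using kb[OF ac a(2)] .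
  have kb2: "k2 \<le> Cb" unfolding k2_def f2_def using kb[OF bc b(2)] .
  have kb3: "k3 \<le> Cb" unfolding k3_def f3_def using kb[OF abc abM] .
  have kb4: "k4 \<le> Cb" unfolding k4_def f4_def using kb[OF abbc abbM] .
  have "card M \<le> card N4 * k4" by (rule i4)
  also have "\<dots> \<le> card N3 * k3 * k4" using i3 by simp
  also have "\<dots> \<le> card N2 * k2 * k3 * k4" using i2 by simp
  also have "\<dots> \<le> card N1 * k1 * k2 * k3 * k4" using i1 by simp
  also have "\<dots> \<le> 1 * Cb * Cb * Cb * Cb" using cN1 kb1 kb2 kb3 kb4 by (intro mult_le_mono) auto
  finally have "card M \<le> Cb ^ 4" by (simp add: power4_eq_xxxx mult.assoc)
  then show ?thesis using cardG unfolding Cb_def by simp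
qed


definition tab :: "('a, 'b) monoid_scheme \<Rightarrow> nat monoid" where
  "tab G = (let n = card (carrier G); f = (SOME f. bij_betw f {..<n} (carrier G)) in
     \<lparr>carrier = {..<n}, monoid.mult = (\<lambda>i j. if i < n \<and> j < n then inv_into {..<n} f (f i \<otimes>\<^bsub>G\<^esub> f j) else 0),
      one = inv_into {..<n} f \<one>\<^bsub>G\<^esub>\<rparr>)"

lemma tab_facts:
  assumes G: "group G" and fin: "finite (carrier G)"
  shows "G \<cong> tab G" "card (carrier G) \<le> N \<Longrightarrow> tab G \<in> (\<lambda>(n, m, e). \<lparr>carrier = {..<n}, monoid.mult = m, one = e\<rparr>) `
           ({..N} \<times> {m. \<forall>i j. m i j \<le> N \<and> (\<not> (i < N \<and> j < N) \<longrightarrow> m i j = 0)} \<times> {..N})"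
proof -
  interpret group G by (rule G)
  define n where "n = card (carrier G)"
  define f where "f = (SOME f. bij_betw f {..<n} (carrier G))"
  have "\<exists>f. bij_betw f {..<n} (carrier G)"
    using ex_bij_betw_nat_finite[OF fin] unfolding n_def by (simp add: atLeast0LessThan)
  then have bij: "bij_betw f {..<n} (carrier G)" unfolding f_def by (rule someI_ex)
  define g where "g = inv_into {..<n} f"
  have bg: "bij_betw g (carrier G) {..<n}" unfolding g_def using bij by (rule bij_betw_inv_into)
  have t: "tab G = \<lparr>carrier = {..<n}, monoid.mult = (\<lambda>i j. if i < n \<and> j < n then g (f i \<otimes>\<^bsub>G\<^esub> f j) else 0), one = g \<one>\<^bsub>G\<^esub>\<rparr>"
    unfolding tab_def Let_def g_def f_def n_def by (rule refl)
  have fg: "f (g x) = x" if "x \<in> carrier G" for x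
    unfolding g_def using that bij by (simp add: bij_betw_def f_inv_into_f)
  have gn: "g x < n" if "x \<in> carrier G" for x using bg that by (auto dest: bij_betwE)
  have "g \<in> iso G (tab G)"
    unfolding iso_def hom_def
  proof (intro CollectI conjI)
    show "g \<in> carrier G \<rightarrow> carrier (tab G)" using gn t by auto
    show "\<forall>x\<in>carrier G. \<forall>y\<in>carrier G. g (x \<otimes>\<^bsub>G\<^esub> y) = g x \<otimes>\<^bsub>tab G\<^esub> g y"
      using gn fg t by simp
    show "bij_betw g (carrier G) (carrier (tab G))" using bg t by simp
  qed
  then show "G \<cong> tab G" unfolding is_iso_def by blast
  assume N: "card (carrier G) \<le> N"
  have nN: "n \<le> N" using N n_def by simp
  let ?m = "(\<lambda>i j. if i < n \<and> j < n then g (f i \<otimes>\<^bsub>G\<^esub> f j) else 0)"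
  have "?m \<in> {m. \<forall>i j. m i j \<le> N \<and> (\<not> (i < N \<and> j < N) \<longrightarrow> m i j = 0)}"
  proof (intro CollectI allI conjI impI)
    fix i j
    show "?m i j \<le> N"
    proof (cases "i < n \<and> j < n")
      case True
      then have "f i \<otimes>\<^bsub>G\<^esub> f j \<in> carrier G" using bij by (auto dest: bij_betwE)
      then show ?thesis using gn True nN by fastforce
    qed auto
    show "?m i j = 0" if "\<not> (i < N \<and> j < N)" using that nN by auto
  qed
  moreover have "g \<one>\<^bsub>G\<^esub> \<le> N" using gn[of "\<one>\<^bsub>G\<^esub>"] nN by simp
  ultimately show "tab G \<in> (\<lambda>(n, m, e). \<lparr>carrier = {..<n}, monoid.mult = m, one = e\<rparr>) `
           ({..N} \<times> {m. \<forall>i j. m i j \<le> N \<and> (\<not> (i < N \<and> j < N) \<longrightarrow> m i j = 0)} \<times> {..N})"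
    unfolding t using nN by (intro image_eqI[where x = "(n, ?m, g \<one>\<^bsub>G\<^esub>)"]) auto
qed

lemma finite_tabfuns: "finite {m :: nat \<Rightarrow> nat \<Rightarrow> nat. \<forall>i j. m i j \<le> N \<and> (\<not> (i < N \<and> j < N) \<longrightarrow> m i j = 0)}"
proof (rule finite_subset)
  let ?h = "\<lambda>t i j. if i < N \<and> j < N then t (i, j) else (0::nat)"
  show "{m :: nat \<Rightarrow> nat \<Rightarrow> nat. \<forall>i j. m i j \<le> N \<and> (\<not> (i < N \<and> j < N) \<longrightarrow> m i j = 0)}
      \<subseteq> ?h ` (({..<N} \<times> {..<N}) \<rightarrow>\<^sub>E {..N})"
  proof
    fix m :: "nat \<Rightarrow> nat \<Rightarrow> nat"
    assume m: "m \<in> {m. \<forall>i j. m i j \<le> N \<and> (\<not> (i < N \<and> j < N) \<longrightarrow> m i j = 0)}"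
    let ?t = "restrict (\<lambda>p. m (fst p) (snd p)) ({..<N} \<times> {..<N})"
    have "m = ?h ?t" using m by (auto simp: fun_eq_iff)
    moreover have "?t \<in> ({..<N} \<times> {..<N}) \<rightarrow>\<^sub>E {..N}" using m by auto
    ultimately show "m \<in> ?h ` (({..<N} \<times> {..<N}) \<rightarrow>\<^sub>E {..N})" by blast
  qed
  show "finite (?h ` (({..<N} \<times> {..<N}) \<rightarrow>\<^sub>E {..N}))" by (intro finite_imageI finite_PiE) auto
qed

lemma finite_classes:
  fixes A :: "('a, 'b) monoid_scheme set"
  assumes A: "\<And>G. G \<in> A \<Longrightarrow> group G \<and> finite (carrier G) \<and> card (carrier G) \<le> N"
  shows "finite (A // {(G, H). G \<cong> H})"
proof -
  define r :: "(('a, 'b) monoid_scheme \<times> ('a, 'b) monoid_scheme) set" where "r = {(G, H). G \<cong> H}"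
  define T where "T = (\<lambda>(n, m, e). \<lparr>carrier = {..<n}, monoid.mult = m, one = e\<rparr>) `
           ({..N} \<times> {m. \<forall>i j. m i j \<le> N \<and> (\<not> (i < N \<and> j < N) \<longrightarrow> m i j = 0)} \<times> {..N})"
  have finT: "finite T" unfolding T_def using finite_tabfuns by auto
  have tabT: "tab ` A \<subseteq> T" unfolding T_def using A tab_facts(2) by blast
  have cls: "r `` {G} = r `` {G'}" if G: "G \<in> A" and G': "G' \<in> A" and e: "tab G = tab G'" for G G'
  proof -
    have gG: "group G" and gG': "group G'" using A G G' by auto
    have i1: "G \<cong> tab G" using tab_facts(1) A G by blast
    have i2: "tab G' \<cong> G'" using group.iso_sym[OF gG'] tab_facts(1) A G' by blast
    have GG': "G \<cong> G'" using iso_trans[OF i1] i2 e by simp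
    have G'G: "G' \<cong> G" using group.iso_sym[OF gG GG'] .
    show ?thesis unfolding r_def using GG' G'G iso_trans by blast
  qed
  have "A // r = (\<lambda>G. r `` {G}) ` A" unfolding quotient_def by blast
  also have "\<dots> \<subseteq> (\<lambda>t. r `` {SOME G. G \<in> A \<and> tab G = t}) ` (tab ` A)"
  proof
    fix Y assume "Y \<in> (\<lambda>G. r `` {G}) ` A"
    then obtain G where G: "G \<in> A" "Y = r `` {G}" by blast
    define G' where "G' = (SOME G'. G' \<in> A \<and> tab G' = tab G)"
    have G': "G' \<in> A \<and> tab G' = tab G" unfolding G'_def by (rule someI[of _ G]) (use G in auto)
    have "Y = r `` {G'}" using cls[OF G(1), of G'] G' G(2) by simp
    then show "Y \<in> (\<lambda>t. r `` {SOME G. G \<in> A \<and> tab G = t}) ` (tab ` A)"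
      using G(1) unfolding G'_def by blast
  qed
  finally have "A // r \<subseteq> (\<lambda>t. r `` {SOME G. G \<in> A \<and> tab G = t}) ` (tab ` A)" .
  moreover have "finite (tab ` A)" using finT tabT finite_subset by blast
  ultimately show ?thesis unfolding r_def[symmetric] using finite_subset by blast
qed


theorem theorem5p2:
  fixes \<tau>\<^sub>1 :: "nat \<Rightarrow> nat multiset"
  shows "finite ({G :: 'a monoid. Cnt_cond 3 \<tau>\<^sub>1 G} // {(G, H). G \<cong> H})"
proof (rule finite_classes[where N = "9 * (\<Sum>i<4. card (carrier (cyc_prod 3 (\<tau>\<^sub>1 i)))) ^ 4"])
  fix G :: "'a monoid" assume "G \<in> {G :: 'a monoid. Cnt_cond 3 \<tau>\<^sub>1 G}"
  then have C: "Cnt_cond 3 \<tau>\<^sub>1 G" by simp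
  then have g: "group G" and f: "finite (carrier G)" unfolding Cnt_cond_def by auto
  have "card (carrier G) \<le> 9 * (\<Sum>i<4. card (carrier (cyc_prod 3 (\<tau>\<^sub>1 i)))) ^ 4"
    using group.card_bound[OF g C] .
  then show "group G \<and> finite (carrier G) \<and> card (carrier G) \<le> 9 * (\<Sum>i<4. card (carrier (cyc_prod 3 (\<tau>\<^sub>1 i)))) ^ 4"
    using g f by simp
qed

end
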